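(* Let $\pi\subseteq\mathbb{R}^{s+1}$ be an absolutely rational subspace with $\dim\pi\ge 2$ and let $\Lambda=\mathbb{Z}^{s+1}\cap\pi$. Let $\zeta\in\Lambda$ be a point with positive first coordinate such that the sequence of best approximations to the ray $\ell(\zeta)$ is $\mathcal{B}(\ell(\zeta))=\{\zeta^1,\zeta^2,\dots,\zeta^\tau,\dots,\zeta^t\}$ with $\zeta^t=\zeta$, and such that $\mathcal{B}_\tau^t(\ell(\zeta))=\{\zeta^\tau,\dots,\zeta^t\}\subset\Lambda$. Suppose that $D(\zeta^\tau)<D(\xi)$ for every integer point $\xi$ not belonging to $\pi$ (with $D$ computed with respect to the ray $\ell(\zeta)$). Then there exists $\epsilon>0$ such that every ray $\ell'\subset K_\epsilon(\ell(\zeta))$ satisfies: (1) $\mathcal{B}(\ell')\supset\mathcal{B}(\ell(\zeta))$; (2) all best approximations to $\ell'$ lying between the approximations $\zeta^\tau$ and $\zeta^t$ (in the ordering of $\mathcal{B}(\ell')$) belong to $\pi$.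
   Context: In $\mathbb{R}^{s+1}$ with coordinates $(x,y_1,\dots,y_s)$, a ray $\ell$ is a ray from the origin lying in the half-space $\{x>0\}$. For small $\epsilon>0$, the open cone $K_\epsilon(\ell)$ consists of all rays $\ell'$ making an angle less than $\epsilon$ with $\ell$. For $\xi$ with $x>0$, $\ell(\xi)=\{\kappa\xi:\kappa\ge0\}$. A subspace $\pi$ is absolutely rational if the lattice $\pi\cap\mathbb{Z}^{s+1}$ has dimension $\dim\pi$. For a ray $\ell$ parallel to $(1,\beta_1,\dots,\beta_s)$ and an integer point $\xi=(q,b_1,\dots,b_s)$, $D(\xi)=\max_j|q\beta_j-b_j|$. A best approximation to $\ell$ is a best simultaneous approximation to $\beta=(\beta_1,\dots,\beta_s)$, i.e. an integer point $(p,a_1,\dots,a_s)$ with $p\ge1$ such that $\max_j|p\beta_j-a_j|<\max_j|q\beta_j-b_j|$ for all $1\le q\le p$ and $(b_1,\dots,b_s)\in\mathbb{Z}^s\setminus\{(a_1,\dots,a_s)\}$. When no $\beta_j$ is a half of an integer, these form a well-defined sequence $\mathcal{B}(\ell)=\{\zeta^1,\zeta^2,\dots\}$ ordered by increasing first coordinate $p^1<p^2<\dots$ (finite if $\ell$ contains a nonzero integer point, infinite otherwise), and $\mathcal{B}_k^t(\ell)=\{\zeta^k,\zeta^{k+1},\dots,\zeta^t\}$. *)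

theory Defs
  imports "HOL-Analysis.Analysis"
begin

text \<open>Points of R^(s+1) are pairs (x, y) with x the first coordinate and
  y :: real^'n the remaining s = CARD('n) coordinates.\<close>

definition int_pt :: "real \<times> (real^'n) \<Rightarrow> bool" where
  "int_pt \<xi> \<longleftrightarrow> fst \<xi> \<in> \<int> \<and> (\<forall>j. snd \<xi> $ j \<in> \<int>)"

definition absolutely_rational :: "(real \<times> (real^'n)) set \<Rightarrow> bool" where
  "absolutely_rational \<pi> \<longleftrightarrow> subspace \<pi> \<and> dim (\<pi> \<inter> {\<xi>. int_pt \<xi>}) = dim \<pi>"

text \<open>A ray in the half-space x > 0 is given by a direction vector v with fst v > 0;
  it is parallel to (1, beta) with beta = snd v / fst v.\<close>
definition ray_beta :: "real \<times> (real^'n) \<Rightarrow> real^'n" where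
  "ray_beta v = (1 / fst v) *\<^sub>R snd v"

definition Dapp :: "real \<times> (real^'n) \<Rightarrow> real \<times> (real^'n) \<Rightarrow> real" where
  "Dapp v \<xi> = Max (range (\<lambda>j. \<bar>fst \<xi> * ray_beta v $ j - snd \<xi> $ j\<bar>))"

definition best_approx :: "real \<times> (real^'n) \<Rightarrow> real \<times> (real^'n) \<Rightarrow> bool" where
  "best_approx v \<xi> \<longleftrightarrow> int_pt \<xi> \<and> fst \<xi> \<ge> 1 \<and>
     (\<forall>\<eta>. int_pt \<eta> \<and> 1 \<le> fst \<eta> \<and> fst \<eta> \<le> fst \<xi> \<and> \<eta> \<noteq> \<xi> \<longrightarrow> Dapp v \<xi> < Dapp v \<eta>)"

definition ray_angle :: "real \<times> (real^'n) \<Rightarrow> real \<times> (real^'n) \<Rightarrow> real" where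
  "ray_angle u v = arccos ((u \<bullet> v) / (norm u * norm v))"

end

theory Submission
  imports Defs
begin

lemma Dapp_ge: "\<bar>fst \<eta> * ray_beta u $ j - snd \<eta> $ j\<bar> \<le> Dapp u \<eta>"
  unfolding Dapp_def by (rule Max_ge) auto

lemma Dapp_nonneg: "0 \<le> Dapp u \<eta>"
  using Dapp_ge[of \<eta> u undefined] by linarith

lemma Dapp_pert:
  assumes "\<forall>j. \<bar>ray_beta u $ j - ray_beta w $ j\<bar> \<le> d" "\<bar>fst \<eta>\<bar> \<le> Q"
  shows "Dapp u \<eta> \<le> Dapp w \<eta> + Q * d"
proof -
  have "\<bar>fst \<eta> * ray_beta u $ j - snd \<eta> $ j\<bar> \<le> Dapp w \<eta> + Q * d" for j
  proof -
    have d0: "0 \<le> d" using assms(1) by (meson abs_ge_zero order_trans)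
    have eq: "fst \<eta> * ray_beta u $ j - snd \<eta> $ j = (fst \<eta> * ray_beta w $ j - snd \<eta> $ j) + fst \<eta> * (ray_beta u $ j - ray_beta w $ j)"
      by (simp add: algebra_simps)
    have "\<bar>fst \<eta> * ray_beta u $ j - snd \<eta> $ j\<bar> \<le> \<bar>fst \<eta> * ray_beta w $ j - snd \<eta> $ j\<bar> + \<bar>fst \<eta>\<bar> * \<bar>ray_beta u $ j - ray_beta w $ j\<bar>"
      unfolding eq abs_mult[symmetric] by (rule abs_triangle_ineq)
    moreover have "\<bar>fst \<eta>\<bar> * \<bar>ray_beta u $ j - ray_beta w $ j\<bar> \<le> Q * d"
      using mult_mono[OF assms(2) assms(1)[rule_format, of j]] d0 assms(2) by (meson abs_ge_zero order_trans)
    moreover have "\<bar>fst \<eta> * ray_beta w $ j - snd \<eta> $ j\<bar> \<le> Dapp w \<eta>" by (rule Dapp_ge)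
    ultimately show ?thesis by linarith
  qed
  then show ?thesis unfolding Dapp_def[of u] by (subst Max_le_iff) auto
qed

lemma ray_beta_scale: "c > 0 \<Longrightarrow> ray_beta (c *\<^sub>R x) = ray_beta x"
  unfolding ray_beta_def by (simp add: scaleR_scaleR)

lemma finite_int_box:
  "finite {\<eta>::real \<times> (real^'n). int_pt \<eta> \<and> \<bar>fst \<eta>\<bar> \<le> R \<and> (\<forall>j. \<bar>snd \<eta> $ j\<bar> \<le> R)}"
proof -
  define F where "F = real_of_int ` {-\<lceil>R\<rceil>..\<lceil>R\<rceil>}"
  have fF: "finite F" unfolding F_def by auto
  have inF: "x \<in> \<int> \<Longrightarrow> \<bar>x\<bar> \<le> R \<Longrightarrow> x \<in> F" for x
  proof -
    assume "x \<in> \<int>" "\<bar>x\<bar> \<le> R"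
    then obtain k where k: "x = of_int k" by (auto elim: Ints_cases)
    have "-\<lceil>R\<rceil> \<le> k" "k \<le> \<lceil>R\<rceil>" using \<open>\<bar>x\<bar> \<le> R\<close> k by (auto simp: abs_le_iff; linarith)+
    then show "x \<in> F" unfolding F_def k by auto
  qed
  have fV: "finite {b::real^'n. \<forall>j. b $ j \<in> F}"
  proof -
    have "{b::real^'n. \<forall>j. b $ j \<in> F} \<subseteq> (\<lambda>f. \<chi> j. f j) ` (PiE UNIV (\<lambda>_. F))"
    proof
      fix b :: "real^'n" assume "b \<in> {b. \<forall>j. b $ j \<in> F}"
      then have "(\<lambda>j. b $ j) \<in> PiE UNIV (\<lambda>_. F)" by auto
      then show "b \<in> (\<lambda>f. \<chi> j. f j) ` (PiE UNIV (\<lambda>_. F))"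
        by (intro image_eqI[where x="\<lambda>j. b $ j"]) auto
    qed
    moreover have "finite (PiE (UNIV::'n set) (\<lambda>_. F))" using fF by (intro finite_PiE) auto
    ultimately show ?thesis by (meson finite_imageI finite_subset)
  qed
  have "{\<eta>::real \<times> (real^'n). int_pt \<eta> \<and> \<bar>fst \<eta>\<bar> \<le> R \<and> (\<forall>j. \<bar>snd \<eta> $ j\<bar> \<le> R)} \<subseteq> F \<times> {b. \<forall>j. b $ j \<in> F}"
    using inF unfolding int_pt_def by auto
  then show ?thesis using fF fV by (meson finite_SigmaI finite_subset)
qed

lemma angle_close:
  fixes \<zeta> :: "real \<times> (real^'n)"
  assumes "fst \<zeta> > 0" "d > 0"
  shows "\<exists>\<epsilon>>0. \<forall>v. fst v > 0 \<and> ray_angle v \<zeta> < \<epsilon> \<longrightarrow> (\<forall>j. \<bar>ray_beta v $ j - ray_beta \<zeta> $ j\<bar> \<le> d)"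
proof -
  have nz: "norm \<zeta> > 0" using assms(1) by auto
  define w where "w = (1 / norm \<zeta>) *\<^sub>R \<zeta>"
  have fw: "fst w > 0" using assms nz unfolding w_def by auto
  have nw: "norm w = 1" using nz unfolding w_def by auto
  have rbw: "ray_beta w = ray_beta \<zeta>" unfolding w_def using nz by (intro ray_beta_scale) auto
  have "isCont ray_beta w" unfolding ray_beta_def using fw
    by (intro continuous_intros) auto
  then obtain \<delta> where \<delta>: "\<delta> > 0" "\<forall>x. dist x w < \<delta> \<longrightarrow> dist (ray_beta x) (ray_beta w) < d"
    using assms(2) unfolding continuous_at_eps_delta by blast
  define \<delta>' where "\<delta>' = min \<delta> 1"
  have \<delta>': "0 < \<delta>'" "\<delta>' \<le> 1" "\<delta>' \<le> \<delta>" using \<delta> unfolding \<delta>'_def by auto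
  define a where "a = 1 - \<delta>'^2/2"
  have "\<delta>'^2 \<le> 1" using \<delta>' by (simp add: power_le_one)
  then have a1: "a < 1" "-1 \<le> a" using \<delta>' unfolding a_def by auto
  have "arccos 1 < arccos a" using a1 by (intro arccos_less_arccos) auto
  then have epos: "arccos a > 0" by simp
  show ?thesis
  proof (intro exI[of _ "arccos a"] conjI allI impI epos)
    fix v :: "real \<times> (real^'n)" and j
    assume v: "0 < fst v \<and> ray_angle v \<zeta> < arccos a"
    have nv: "norm v > 0" using v by auto
    define c where "c = (v \<bullet> \<zeta>) / (norm v * norm \<zeta>)"
    have "\<bar>v \<bullet> \<zeta>\<bar> \<le> norm v * norm \<zeta>" by (rule Cauchy_Schwarz_ineq2)
    then have cb: "\<bar>c\<bar> \<le> 1" unfolding c_def using nv nz by (auto simp: abs_divide divide_le_eq_1)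
    have "arccos c < arccos a" using v unfolding ray_angle_def c_def by simp
    then have ca: "a < c" using cb a1 by (subst (asm) arccos_less_mono) auto
    define u where "u = (1 / norm v) *\<^sub>R v"
    have nu: "norm u = 1" using nv unfolding u_def by auto
    have uw: "u \<bullet> w = c" unfolding u_def w_def c_def by (simp add: field_simps)
    have "(norm (u - w))^2 = (norm u)^2 + (norm w)^2 - 2 * (u \<bullet> w)"
      by (simp add: power2_norm_eq_inner inner_diff inner_commute)
    also have "\<dots> = 2 - 2 * c" using nu nw uw by simp
    also have "\<dots> < \<delta>'^2" using ca unfolding a_def by simp
    finally have "norm (u - w) < \<delta>'" using \<delta>'
      by (meson norm_ge_zero power_less_imp_less_base less_imp_le)
    then have "dist u w < \<delta>" using \<delta>' by (simp add: dist_norm)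
    then have "dist (ray_beta u) (ray_beta w) < d" using \<delta> by blast
    moreover have "ray_beta u = ray_beta v" unfolding u_def using nv by (intro ray_beta_scale) auto
    ultimately have "norm (ray_beta v - ray_beta \<zeta>) < d" using rbw by (simp add: dist_norm)
    then show "\<bar>ray_beta v $ j - ray_beta \<zeta> $ j\<bar> \<le> d"
      using component_le_norm_cart[of "ray_beta v - ray_beta \<zeta>" j] by simp
  qed
qed

theorem lemma2p1:
  fixes \<pi> :: "(real \<times> (real^'n)) set" and \<zeta> \<zeta>\<tau> :: "real \<times> (real^'n)"
  assumes "absolutely_rational \<pi>"
    and "dim \<pi> \<ge> 2"
    and "int_pt \<zeta>" and "\<zeta> \<in> \<pi>" and "fst \<zeta> > 0"
    and "best_approx \<zeta> \<zeta>"
    and "best_approx \<zeta> \<zeta>\<tau>" and "fst \<zeta>\<tau> \<le> fst \<zeta>"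
    and "\<forall>\<xi>. best_approx \<zeta> \<xi> \<and> fst \<zeta>\<tau> \<le> fst \<xi> \<and> fst \<xi> \<le> fst \<zeta> \<longrightarrow> \<xi> \<in> \<pi>"
    and "\<forall>\<xi>. int_pt \<xi> \<and> \<xi> \<notin> \<pi> \<longrightarrow> Dapp \<zeta> \<zeta>\<tau> < Dapp \<zeta> \<xi>"
  shows "\<exists>\<epsilon>>0. \<forall>v. fst v > 0 \<and> ray_angle v \<zeta> < \<epsilon> \<longrightarrow>
           {\<xi>. best_approx \<zeta> \<xi>} \<subseteq> {\<xi>. best_approx v \<xi>} \<and>
           (\<forall>\<xi>. best_approx v \<xi> \<and> fst \<zeta>\<tau> \<le> fst \<xi> \<and> fst \<xi> \<le> fst \<zeta> \<longrightarrow> \<xi> \<in> \<pi>)"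
proof -
  define Q where "Q = fst \<zeta>"
  have Q0: "Q > 0" using assms(5) Q_def by simp
  define \<beta> where "\<beta> = ray_beta \<zeta>"
  have Dzz: "Dapp \<zeta> \<zeta> = 0"
  proof -
    have "\<And>j. fst \<zeta> * ray_beta \<zeta> $ j - snd \<zeta> $ j = 0"
      using assms(5) unfolding ray_beta_def by simp
    then have "range (\<lambda>j. \<bar>fst \<zeta> * ray_beta \<zeta> $ j - snd \<zeta> $ j\<bar>) = {0}" by auto
    then show ?thesis unfolding Dapp_def by simp
  qed
  define e1 :: "real \<times> (real^'n)" where "e1 = (1, 0)"
  have e1: "int_pt e1" "fst e1 = 1" unfolding e1_def int_pt_def by auto
  define M where "M = Dapp \<zeta> e1 + 1"
  define T where "T = {\<eta>. int_pt \<eta> \<and> 1 \<le> fst \<eta> \<and> fst \<eta> \<le> Q \<and> Dapp \<zeta> \<eta> \<le> M}"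
  define R where "R = Q + Q * norm \<beta> + M"
  have "T \<subseteq> {\<eta>::real \<times> (real^'n). int_pt \<eta> \<and> \<bar>fst \<eta>\<bar> \<le> R \<and> (\<forall>j. \<bar>snd \<eta> $ j\<bar> \<le> R)}"
  proof
    fix \<eta> assume h: "\<eta> \<in> T"
    have M0: "M \<ge> 0" unfolding M_def using Dapp_nonneg[of \<zeta> e1] by simp
    have nb: "Q * norm \<beta> \<ge> 0" using Q0 by simp
    have "\<bar>snd \<eta> $ j\<bar> \<le> R" for j
    proof -
      have "\<bar>fst \<eta> * \<beta> $ j - snd \<eta> $ j\<bar> \<le> M" using Dapp_ge[of \<eta> \<zeta> j] h unfolding T_def \<beta>_def by auto
      moreover have "\<bar>fst \<eta> * \<beta> $ j\<bar> \<le> Q * norm \<beta>"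
        using h component_le_norm_cart[of \<beta> j] unfolding T_def abs_mult
        by (intro mult_mono) auto
      ultimately show ?thesis unfolding R_def using Q0 by linarith
    qed
    moreover have "\<bar>fst \<eta>\<bar> \<le> R"
    proof -
      have "1 \<le> fst \<eta>" "fst \<eta> \<le> Q" using h unfolding T_def by auto
      then show ?thesis using M0 nb unfolding R_def by linarith
    qed
    ultimately show "\<eta> \<in> {\<eta>. int_pt \<eta> \<and> \<bar>fst \<eta>\<bar> \<le> R \<and> (\<forall>j. \<bar>snd \<eta> $ j\<bar> \<le> R)}"
      using h unfolding T_def by auto
  qed
  then have fT: "finite T" using finite_int_box by (rule finite_subset)
  define G where "G = (\<lambda>(a,b). \<bar>Dapp \<zeta> a - Dapp \<zeta> b\<bar>) ` {(a,b). a \<in> T \<and> b \<in> T \<and> Dapp \<zeta> a \<noteq> Dapp \<zeta> b}"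
  have fG: "finite G" unfolding G_def
    by (rule finite_imageI, rule finite_subset[of _ "T \<times> T"]) (use fT in auto)
  define g where "g = Min (insert 1 G)"
  have g0: "g > 0" unfolding g_def using fG by (subst Min_gr_iff) (auto simp: G_def)
  have g1: "g \<le> 1" unfolding g_def using fG by simp
  have key: "Dapp \<zeta> a + g \<le> Dapp \<zeta> b"
    if "a \<in> T" "Dapp \<zeta> a \<le> Dapp \<zeta> e1" "int_pt b" "1 \<le> fst b" "fst b \<le> Q" "Dapp \<zeta> a < Dapp \<zeta> b" for a b
  proof (cases "b \<in> T")
    case True
    then have "\<bar>Dapp \<zeta> a - Dapp \<zeta> b\<bar> \<in> G" unfolding G_def using that
      by (intro image_eqI[where x="(a,b)"]) auto
    then have "g \<le> \<bar>Dapp \<zeta> a - Dapp \<zeta> b\<bar>" unfolding g_def using fG by simp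
    then show ?thesis using that by linarith
  next
    case False
    then have "Dapp \<zeta> b > M" using that unfolding T_def by auto
    then show ?thesis using that g1 unfolding M_def by linarith
  qed
  define d where "d = g / (4 * Q)"
  have d0: "d > 0" unfolding d_def using g0 Q0 by simp
  have Qd: "Q * d = g / 4" unfolding d_def using Q0 by simp
  obtain \<epsilon> where \<epsilon>: "\<epsilon> > 0" "\<forall>v. fst v > 0 \<and> ray_angle v \<zeta> < \<epsilon> \<longrightarrow> (\<forall>j. \<bar>ray_beta v $ j - ray_beta \<zeta> $ j\<bar> \<le> d)"
    using angle_close[OF assms(5) d0] by blast
  have ba_le: "fst \<xi> \<le> Q" if "best_approx \<zeta> \<xi>" for \<xi>
  proof (rule ccontr)
    assume "\<not> fst \<xi> \<le> Q"
    then have "\<zeta> \<noteq> \<xi>" unfolding Q_def by auto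
    have all: "\<forall>\<eta>. int_pt \<eta> \<and> 1 \<le> fst \<eta> \<and> fst \<eta> \<le> fst \<xi> \<and> \<eta> \<noteq> \<xi> \<longrightarrow> Dapp \<zeta> \<xi> < Dapp \<zeta> \<eta>"
      using that unfolding best_approx_def by blast
    have "1 \<le> fst \<zeta>" using assms(6) unfolding best_approx_def by blast
    moreover have "fst \<zeta> \<le> fst \<xi>" using \<open>\<not> fst \<xi> \<le> Q\<close> unfolding Q_def by linarith
    ultimately have "Dapp \<zeta> \<xi> < Dapp \<zeta> \<zeta>" using all assms(3) \<open>\<zeta> \<noteq> \<xi>\<close>
      by blast
    then show False using Dzz Dapp_nonneg[of \<zeta> \<xi>] by simp
  qed
  have ba_e1: "Dapp \<zeta> \<xi> \<le> Dapp \<zeta> e1" if "best_approx \<zeta> \<xi>" for \<xi>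
  proof (cases "\<xi> = e1")
    case False
    have "int_pt \<xi> \<and> 1 \<le> fst \<xi> \<and> (\<forall>\<eta>. int_pt \<eta> \<and> 1 \<le> fst \<eta> \<and> fst \<eta> \<le> fst \<xi> \<and> \<eta> \<noteq> \<xi> \<longrightarrow> Dapp \<zeta> \<xi> < Dapp \<zeta> \<eta>)"
      using that unfolding best_approx_def by blast
    then have "Dapp \<zeta> \<xi> < Dapp \<zeta> e1" using e1 False by (metis order_refl)
    then show ?thesis by simp
  qed simp
  have baT: "\<xi> \<in> T" if "best_approx \<zeta> \<xi>" for \<xi>
    using that ba_le ba_e1 unfolding T_def M_def best_approx_def by fastforce
  show ?thesis
  proof (intro exI[of _ \<epsilon>] conjI allI impI \<epsilon>(1) subsetI)
    fix v assume v: "0 < fst v \<and> ray_angle v \<zeta> < \<epsilon>"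
    have cl: "\<forall>j. \<bar>ray_beta v $ j - ray_beta \<zeta> $ j\<bar> \<le> d" using \<epsilon>(2) v by blast
    have cl': "\<forall>j. \<bar>ray_beta \<zeta> $ j - ray_beta v $ j\<bar> \<le> d" using cl by (simp add: abs_minus_commute)
    have P1: "Dapp v \<eta> \<le> Dapp \<zeta> \<eta> + g/4" if "0 \<le> fst \<eta>" "fst \<eta> \<le> Q" for \<eta>
      using Dapp_pert[OF cl, of \<eta> Q] that Qd by simp
    have P2: "Dapp \<zeta> \<eta> \<le> Dapp v \<eta> + g/4" if "0 \<le> fst \<eta>" "fst \<eta> \<le> Q" for \<eta>
      using Dapp_pert[OF cl', of \<eta> Q] that Qd by simp
    {
      fix \<xi> assume "\<xi> \<in> {\<xi>. best_approx \<zeta> \<xi>}"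
      then have b: "best_approx \<zeta> \<xi>" by simp
      have "Dapp v \<xi> < Dapp v \<eta>" if "int_pt \<eta>" "1 \<le> fst \<eta>" "fst \<eta> \<le> fst \<xi>" "\<eta> \<noteq> \<xi>" for \<eta>
      proof -
        have lt: "Dapp \<zeta> \<xi> < Dapp \<zeta> \<eta>" using b that unfolding best_approx_def by blast
        have "fst \<eta> \<le> Q" using ba_le[OF b] that by simp
        then have "Dapp \<zeta> \<xi> + g \<le> Dapp \<zeta> \<eta>" using key[OF baT[OF b] ba_e1[OF b] that(1,2) _ lt] by simp
        moreover have "Dapp v \<xi> \<le> Dapp \<zeta> \<xi> + g/4" using P1 b ba_le[OF b] unfolding best_approx_def by simp
        moreover have "Dapp \<zeta> \<eta> \<le> Dapp v \<eta> + g/4" using P2 that \<open>fst \<eta> \<le> Q\<close> by simp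
        ultimately show ?thesis using g0 by linarith
      qed
      then show "\<xi> \<in> {\<xi>. best_approx v \<xi>}" using b unfolding best_approx_def by auto
    }
    {
      fix \<xi> assume h: "best_approx v \<xi> \<and> fst \<zeta>\<tau> \<le> fst \<xi> \<and> fst \<xi> \<le> fst \<zeta>"
      show "\<xi> \<in> \<pi>"
      proof (rule ccontr)
        assume np: "\<xi> \<notin> \<pi>"
        have tp: "\<zeta>\<tau> \<in> \<pi>" using assms(7,8,9) by blast
        then have ne: "\<zeta>\<tau> \<noteq> \<xi>" using np by auto
        have t1: "int_pt \<zeta>\<tau>" "1 \<le> fst \<zeta>\<tau>" using assms(7) unfolding best_approx_def by auto
        have lv: "Dapp v \<xi> < Dapp v \<zeta>\<tau>" using h t1 ne unfolding best_approx_def by blast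
        have xi: "int_pt \<xi>" "1 \<le> fst \<xi>" using h unfolding best_approx_def by auto
        have lz: "Dapp \<zeta> \<zeta>\<tau> < Dapp \<zeta> \<xi>" using assms(10) np xi by blast
        have "Dapp \<zeta> \<zeta>\<tau> + g \<le> Dapp \<zeta> \<xi>"
          using key[OF baT[OF assms(7)] ba_e1[OF assms(7)] xi _ lz] h unfolding Q_def by simp
        moreover have "Dapp v \<zeta>\<tau> \<le> Dapp \<zeta> \<zeta>\<tau> + g/4" using P1 t1 assms(8) unfolding Q_def by simp
        moreover have "Dapp \<zeta> \<xi> \<le> Dapp v \<xi> + g/4" using P2 xi h unfolding Q_def by simp
        ultimately show False using lv g0 by linarith
      qed
    }
  qed
qed

end
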